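(* Let $2\le s\le k$, $h>0$, $q_0,p_0\in\mathbb{R}^m$. If polynomials $u,v$ of degree at most $s$ satisfy the LIM$(k,s)$ equations, then the block vector $\boldsymbol\psi=(\psi_0;\dots;\psi_{s-1})\in\mathbb{R}^{sm}$ with $\psi_i=\sum_{j=0}^{s-1}\hat\rho_{ij}(u)\hat\gamma_j(v)-\hat\eta_i(u)$ satisfies the discrete equation (D) below, and $$q_1=u(h)=q_0+hp_0+\frac{h^2}{2}\Big(\psi_0-\frac{1}{\sqrt3}\psi_1\right),\qquad p_1=v(h)=p_0+h\psi_0 .$$ Conversely, if $\boldsymbol\psi$ solves (D), then defining $\hat\gamma=(e_1\otimes p_0)+h(X_s\otimes I_m)\boldsymbol\psi$ (blocks $\hat\gamma_0,\dots,\hat\gamma_{s-1}$), $u(ch)=q_0+h\sum_i(\int_0^cP_i)\hat\gamma_i$, $v(ch)=p_0+h\sum_i(\int_0^cP_i)\psi_i$ yields polynomials satisfying the LIM$(k,s)$ equations.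
   Context: $U:\mathbb{R}^m\to\mathbb{R}$ is $C^1$, $B:\mathbb{R}^m\to\mathbb{R}^{m\times m}$ continuous, $B(q)^\top=-B(q)$. $\{P_j\}$ orthonormal Legendre basis on $[0,1]$ ($\deg P_j=j$, $\int_0^1P_iP_j=\delta_{ij}$). $(\hat c_\ell,\hat b_\ell)_{\ell=1}^s$ and $(c_\ell,b_\ell)_{\ell=1}^k$: nodes/weights of the $s$- and $k$-point Gauss–Legendre rules on $[0,1]$. Quadrature-based coefficients: $\hat\gamma_i(v)=\sum_{\ell=1}^s\hat b_\ell P_i(\hat c_\ell)v(\hat c_\ell h)$, $\hat\rho_{ij}(u)=\sum_{\ell=1}^s\hat b_\ell P_i(\hat c_\ell)P_j(\hat c_\ell)B(u(\hat c_\ell h))$, $\hat\eta_i(u)=\sum_{\ell=1}^kb_\ell P_i(c_\ell)\nabla U(u(c_\ell h))$. LIM$(k,s)$ equations: for all $c\in[0,1]$, $u(ch)=q_0+h\sum_{i=0}^{s-1}(\int_0^cP_i)\hat\gamma_i(v)$, $v(ch)=p_0+h\sum_{i=0}^{s-1}(\int_0^cP_i)[-\hat\eta_i(u)+\sum_{j=0}^{s-1}\hat\rho_{ij}(u)\hat\gamma_j(v)]$; $q_1=u(h)$, $p_1=v(h)$. Matrices: $\hat{\cal P}_s=(P_{j-1}(\hat c_i))\in\mathbb{R}^{s\times s}$, $\hat{\cal I}_s=(\int_0^{\hat c_i}P_{j-1})\in\mathbb{R}^{s\times s}$, ${\cal P}_s=(P_{j-1}(c_i))\in\mathbb{R}^{k\times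 s}$, ${\cal I}_s=(\int_0^{c_i}P_{j-1})\in\mathbb{R}^{k\times s}$, $\hat\Omega=\mathrm{diag}(\hat b_1,\dots,\hat b_s)$, $\Omega=\mathrm{diag}(b_1,\dots,b_k)$; $X_s\in\mathbb{R}^{s\times s}$ tridiagonal with $(X_s)_{11}=\xi_0$, $(X_s)_{i+1,i}=\xi_i$, $(X_s)_{i,i+1}=-\xi_i$ ($i=1,\dots,s-1$), other entries $0$, where $\xi_i=(2\sqrt{|4i^2-1|})^{-1}$. $\hat{\mathbf c}=(\hat c_1,\dots,\hat c_s)^\top$, $\mathbf c=(c_1,\dots,c_k)^\top$, $\mathbf 1_r=(1,\dots,1)^\top\in\mathbb{R}^r$, $e_1=(1,0,\dots,0)^\top\in\mathbb{R}^s$, $I_m$ the $m\times m$ identity. For a block vector $x=(x_1;\dots;x_s)$, $x_\ell\in\mathbb{R}^m$, $\mathcal B(x)=\mathrm{blockdiag}(B(x_1),\dots,B(x_s))$; $\nabla U$ of a block vector $(y_1;\dots;y_k)$ is $(\nabla U(y_1);\dots;\nabla U(y_k))$. Equation (D): $$\boldsymbol\psi=(\hat{\cal P}_s^\top\hat\Omega\otimes I_m)\Big[\mathcal B\big(\mathbf 1_s\otimes q_0+h\hat{\mathbf c}\otimes p_0+h^2(\hat{\cal I}_sX_s\otimes I_m)\boldsymbol\psi\big)\big(\mathbf 1_s\otimes p_0+h(\hat{\cal I}_s\otimes I_m)\boldsymbol\psi\big)\Big]-({\cal P}_s^\top\Omega\otimes I_m)\nabla U\big(\mathbf 1_k\otimes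 q_0+h\mathbf c\otimes p_0+h^2({\cal I}_sX_s\otimes I_m)\boldsymbol\psi\big).$$ *)

theory Defs
  imports "HOL-Analysis.Analysis"
begin

text \<open>Orthonormal shifted Legendre polynomials on [0,1] (positive leading coefficient):
  legP n x = sqrt(2n+1) * L_n(2x-1), L_n the classical Legendre polynomial.\<close>
definition legP :: "nat \<Rightarrow> real \<Rightarrow> real" where
  "legP n x = sqrt (2 * real n + 1) *
     (\<Sum>k\<le>n. (-1) ^ (n + k) * real (n choose k) * real ((n + k) choose k) * x ^ k)"

definition intP :: "nat \<Rightarrow> real \<Rightarrow> real" where
  "intP i c = interval_lebesgue_integral lborel (ereal 0) (ereal c) (legP i)"

definition gl_node :: "nat \<Rightarrow> nat \<Rightarrow> real" where
  "gl_node n l = sorted_list_of_set {x. legP n x = 0} ! l"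

definition gl_weight :: "nat \<Rightarrow> nat \<Rightarrow> real" where
  "gl_weight n l = integral {0..1}
     (\<lambda>x. \<Prod>j\<in>{0..<n} - {l}. (x - gl_node n j) / (gl_node n l - gl_node n j))"

text \<open>xi_i and the tridiagonal matrix X_s (0-based indices; only entries with i,j < s are used).\<close>
definition xi :: "nat \<Rightarrow> real" where
  "xi i = 1 / (2 * sqrt \<bar>4 * (real i)^2 - 1\<bar>)"

definition Xmat :: "nat \<Rightarrow> nat \<Rightarrow> real" where
  "Xmat i j = (if i = 0 \<and> j = 0 then xi 0
               else if i = j + 1 then xi i
               else if j = i + 1 then - xi j
               else 0)"

definition is_vpoly :: "nat \<Rightarrow> (real \<Rightarrow> 'a::real_vector) \<Rightarrow> bool" where
  "is_vpoly n u \<longleftrightarrow> (\<exists>a. \<forall>t. u t = (\<Sum>j\<le>n. t ^ j *\<^sub>R a j))"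

definition gam_hat :: "nat \<Rightarrow> real \<Rightarrow> (real \<Rightarrow> real^'m) \<Rightarrow> nat \<Rightarrow> real^'m" where
  "gam_hat s h v i = (\<Sum>l<s. (gl_weight s l * legP i (gl_node s l)) *\<^sub>R v (gl_node s l * h))"

definition rho_hat :: "(real^'m \<Rightarrow> real^'m^'m) \<Rightarrow> nat \<Rightarrow> real \<Rightarrow> (real \<Rightarrow> real^'m)
    \<Rightarrow> nat \<Rightarrow> nat \<Rightarrow> real^'m^'m" where
  "rho_hat B s h u i j = (\<Sum>l<s. (gl_weight s l * legP i (gl_node s l) * legP j (gl_node s l))
                                   *\<^sub>R B (u (gl_node s l * h)))"

definition eta_hat :: "(real^'m \<Rightarrow> real^'m) \<Rightarrow> nat \<Rightarrow> real \<Rightarrow> (real \<Rightarrow> real^'m) \<Rightarrow> nat \<Rightarrow> real^'m" where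
  "eta_hat gU k h u i = (\<Sum>l<k. (gl_weight k l * legP i (gl_node k l)) *\<^sub>R gU (u (gl_node k l * h)))"

definition LIM_eqs :: "(real^'m \<Rightarrow> real^'m) \<Rightarrow> (real^'m \<Rightarrow> real^'m^'m) \<Rightarrow> nat \<Rightarrow> nat \<Rightarrow> real
    \<Rightarrow> real^'m \<Rightarrow> real^'m \<Rightarrow> (real \<Rightarrow> real^'m) \<Rightarrow> (real \<Rightarrow> real^'m) \<Rightarrow> bool" where
  "LIM_eqs gU B k s h q0 p0 u v \<longleftrightarrow>
     (\<forall>c\<in>{0..1}.
        u (c * h) = q0 + h *\<^sub>R (\<Sum>i<s. intP i c *\<^sub>R gam_hat s h v i) \<and>
        v (c * h) = p0 + h *\<^sub>R (\<Sum>i<s. intP i c *\<^sub>R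
              (- eta_hat gU k h u i + (\<Sum>j<s. rho_hat B s h u i j *v gam_hat s h v j))))"

text \<open>Matrix I (nodes of the n-point rule) times X_s, entry (l,j), with s columns.\<close>
definition IX :: "nat \<Rightarrow> nat \<Rightarrow> nat \<Rightarrow> nat \<Rightarrow> real" where
  "IX n s l j = (\<Sum>r<s. intP r (gl_node n l) * Xmat r j)"

text \<open>Equation (D), written block-wise: psi i is the i-th block (i = 0..s-1).\<close>
definition eqD :: "(real^'m \<Rightarrow> real^'m) \<Rightarrow> (real^'m \<Rightarrow> real^'m^'m) \<Rightarrow> nat \<Rightarrow> nat \<Rightarrow> real
    \<Rightarrow> real^'m \<Rightarrow> real^'m \<Rightarrow> (nat \<Rightarrow> real^'m) \<Rightarrow> bool" where
  "eqD gU B k s h q0 p0 psi \<longleftrightarrow>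
     (\<forall>i<s. psi i =
        (\<Sum>l<s. (gl_weight s l * legP i (gl_node s l)) *\<^sub>R
           (B (q0 + (h * gl_node s l) *\<^sub>R p0 + h^2 *\<^sub>R (\<Sum>j<s. IX s s l j *\<^sub>R psi j))
            *v (p0 + h *\<^sub>R (\<Sum>j<s. intP j (gl_node s l) *\<^sub>R psi j))))
      - (\<Sum>l<k. (gl_weight k l * legP i (gl_node k l)) *\<^sub>R
           gU (q0 + (h * gl_node k l) *\<^sub>R p0 + h^2 *\<^sub>R (\<Sum>j<s. IX k s l j *\<^sub>R psi j))))"

end

theory Submission
  imports Defs "HOL-Computational_Algebra.Polynomial"
begin


lemma poch_fact: "pochhammer (real (k+1)) n = fact (k+n) / fact k"
proof (induction n)
  case 0 then show ?case by simp
next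
  case (Suc n) 
  have "pochhammer (real (k+1)) (Suc n) = pochhammer (real (k+1)) n * (real k + real n + 1)"
    by (simp add: pochhammer_Suc)
  also have "\<dots> = fact (k+n) / fact k * (real (Suc (k+n)))" using Suc by simp
  also have "\<dots> = fact (k + Suc n) / fact k" by simp
  finally show ?case .
qed

lemma poch_fact': "pochhammer (1 + real k) n = fact (k+n) / fact k"
  using poch_fact[of k n] by (simp add: add.commute)

lemma coeff_hpd: "coeff ((pderiv^^n) p) k = pochhammer (of_nat (k+1)) n * coeff p (k+n)"
proof (induction n arbitrary: p)
  case 0 then show ?case by simp
next
  case (Suc n)
  have "coeff ((pderiv^^Suc n) p) k = coeff ((pderiv^^n) (pderiv p)) k"
    by (simp add: funpow_Suc_right del: funpow.simps)
  also have "\<dots> = pochhammer (of_nat (k+1)) n * (of_nat (Suc (k+n)) * coeff p (Suc (k+n)))"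
    using Suc by (simp add: coeff_pderiv)
  also have "\<dots> = pochhammer (of_nat (k+1)) (Suc n) * coeff p (k + Suc n)"
    by (simp add: pochhammer_Suc algebra_simps)
  finally show ?case .
qed

lemma t1: "(of_nat c * monom 1 k * [:b:] :: real poly) = monom (of_nat c * b) k"
  by (simp add: of_nat_poly poly_eq_iff coeff_monom_mult mult.commute coeff_monom)

lemma pc_pow: "[:a:]^m = [:a^m:]" by (induct m) (auto simp: mult.commute)

lemma lin_power: "[:a,1:]^n = (\<Sum>j\<le>n. monom (real (n choose j) * a^(n-j)) j)"
proof -
  have "[:a,1:] = monom 1 1 + [:a:]" by (simp add: monom_altdef)
  then have "[:a,1:]^n = (\<Sum>k\<le>n. of_nat (n choose k) * monom 1 1 ^ k * [:a:]^(n-k))"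
    by (simp add: binomial_ring)
  also have "\<dots> = (\<Sum>j\<le>n. monom (real (n choose j) * a^(n-j)) j)"
    by (intro sum.cong refl) (simp only: monom_power power_one mult_1 pc_pow t1)
  finally show ?thesis .
qed

lemma coeff_lin_power: "coeff ([:a,1:]^n) k = (if k \<le> n then real (n choose k) * a^(n-k) else 0)"
  by (simp add: lin_power coeff_sum coeff_monom)

definition Wp :: "nat \<Rightarrow> real poly" where "Wp n = [:0,-1,1:]^n"
definition Rp :: "nat \<Rightarrow> real poly" where "Rp n = (pderiv^^n) (Wp n)"
definition cn :: "nat \<Rightarrow> real" where "cn n = sqrt (2 * real n + 1) / fact n"
definition Lp :: "nat \<Rightarrow> real poly" where "Lp n = smult (cn n) (Rp n)"

lemma Wp_alt: "Wp n = monom 1 n * [:-1,1:]^n"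
proof -
  have "Wp n = ([:0,1:] * [:-1::real,1:])^n" by (simp add: Wp_def)
  also have "\<dots> = [:0,1:]^n * [:-1::real,1:]^n" by (rule power_mult_distrib)
  also have "[:0,1:]^n = (monom 1 n :: real poly)" by (simp add: monom_altdef)
  finally show ?thesis .
qed

lemma coeff_Wp: "coeff (Wp n) (k+n) = (if k \<le> n then real (n choose k) * (-1)^(n-k) else 0)"
  by (simp add: Wp_alt coeff_monom_mult coeff_lin_power)

lemma coeff_Rp: "coeff (Rp n) k = (if k \<le> n then fact (k+n) / fact k * real (n choose k) * (-1)^(n-k) else 0)"
  by (simp add: Rp_def coeff_hpd coeff_Wp poch_fact')

lemma degree_Rp: "degree (Rp n) \<le> n"
  by (rule degree_le) (simp add: coeff_Rp)

lemma degree_Lp: "degree (Lp n) \<le> n"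
  using degree_Rp by (simp add: Lp_def)

lemma poly_upto: fixes p :: "real poly" assumes "degree p \<le> N" shows "poly p x = (\<Sum>i\<le>N. coeff p i * x^i)"
proof -
  have "poly p x = (\<Sum>i\<le>degree p. coeff p i * x^i)" by (rule poly_altdef)
  also have "\<dots> = (\<Sum>i\<le>N. coeff p i * x^i)"
    by (rule sum.mono_neutral_left) (use assms in \<open>auto simp: coeff_eq_0\<close>)
  finally show ?thesis .
qed

lemma legP_poly: "legP n x = poly (Lp n) x"
proof -
  have "poly (Lp n) x = cn n * (\<Sum>k\<le>n. coeff (Rp n) k * x^k)"
    by (simp add: Lp_def poly_upto[OF degree_Rp])
  also have "\<dots> = sqrt (2 * real n + 1) *
     (\<Sum>k\<le>n. (-1) ^ (n + k) * real (n choose k) * real ((n + k) choose k) * x ^ k)"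
    unfolding sum_distrib_left
  proof (intro sum.cong refl)
    fix k assume k: "k \<in> {..n}"
    then have kn: "k \<le> n" by simp
    have e1: "((-1::real)^(n-k)) = (-1)^(n+k)"
    proof -
      have "n + k = (n - k) + 2 * k" using kn by simp
      then have "((-1::real)^(n+k)) = (-1)^(n-k) * ((-1)^2)^k" by (simp only: power_add power_mult)
      then show ?thesis by simp
    qed
    have e2: "real ((n + k) choose k) = fact (n+k) / (fact k * fact n)"
      by (simp add: binomial_fact)
    show "cn n * (coeff (Rp n) k * x ^ k) = sqrt (2 * real n + 1) *
        ((- 1) ^ (n + k) * real (n choose k) * real (n + k choose k) * x ^ k)"
    proof -
      have f: "fact (k+n) = (fact (n+k) :: real)" by (simp add: add.commute)
      have "coeff (Rp n) k = fact (n+k) / fact k * real (n choose k) * (-1)^(n+k)"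
        using kn by (simp add: coeff_Rp e1 f)
      moreover have "\<And>s F G K C E X::real. s / F * (G / K * C * E * X) = s * (E * C * (G / (K * F)) * X)"
        by (simp add: field_simps)
      ultimately show ?thesis unfolding e2 cn_def by metis
    qed
  qed
  finally show ?thesis unfolding legP_def by (rule sym)
qed

definition lcL :: "nat \<Rightarrow> real" where "lcL n = sqrt (2 * real n + 1) * fact (2*n) / (fact n * fact n)"

lemma coeff_Lp_n: "coeff (Lp n) n = lcL n"
proof -
  have "coeff (Lp n) n = cn n * (fact (n+n) / fact n)" by (simp add: Lp_def coeff_Rp)
  also have "\<dots> = lcL n"
  proof -
    have e: "(2::nat)*n = n+n" by simp
    show ?thesis unfolding cn_def lcL_def e by simp
  qed
  finally show ?thesis .
qed

lemma lcL_pos: "lcL n > 0"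
  by (simp add: lcL_def)

lemma coeff_Lp_gt: "k > n \<Longrightarrow> coeff (Lp n) k = 0"
  by (simp add: Lp_def coeff_Rp)

lemma Lp_0: "Lp 0 = 1"
  by (simp add: Lp_def Rp_def Wp_def cn_def)



definition Ip :: "real poly \<Rightarrow> real" where "Ip p = integral {0..1} (\<lambda>x. poly p x)"
definition Ap :: "real poly \<Rightarrow> real poly" where
  "Ap p = (\<Sum>i\<le>degree p. monom (coeff p i / real (Suc i)) (Suc i))"

lemma coeff_Ap_Suc: "coeff (Ap p) (Suc k) = coeff p k / real (Suc k)"
  by (auto simp: Ap_def coeff_sum coeff_monom coeff_eq_0)

lemma coeff_Ap_0: "coeff (Ap p) 0 = 0"
  by (simp add: Ap_def coeff_sum coeff_monom)

lemma pderiv_Ap: "pderiv (Ap p) = p"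
  by (simp add: poly_eq_iff coeff_pderiv coeff_Ap_Suc del: of_nat_Suc)

lemma poly_Ap_0: "poly (Ap p) 0 = 0"
  by (simp add: poly_0_coeff_0 coeff_Ap_0)

lemma coeff_Ap_gt: "k > Suc (degree p) \<Longrightarrow> coeff (Ap p) k = 0"
  by (cases k) (auto simp: coeff_Ap_Suc coeff_Ap_0 coeff_eq_0)

lemma degree_Ap: "degree (Ap p) \<le> Suc (degree p)"
  by (rule degree_le) (simp add: coeff_Ap_gt)

lemma has_int_poly:
  fixes F p :: "real poly"
  assumes "pderiv F = p"
  shows "((\<lambda>x. poly p x) has_integral (poly F 1 - poly F 0)) {0..1}"
proof -
  have "((\<lambda>x. poly F x) has_vector_derivative poly p x) (at x within {0..1})" for x
  proof -
    have "DERIV (\<lambda>x. poly F x) x :> poly p x" using poly_DERIV[of F x] assms by simp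
    then have "((\<lambda>x. poly F x) has_real_derivative poly p x) (at x within {0..1})"
      by (rule has_field_derivative_at_within)
    then show ?thesis by (simp add: has_real_derivative_iff_has_vector_derivative)
  qed
  then show ?thesis by (intro fundamental_theorem_of_calculus) auto
qed

lemma Ip_deriv: "Ip (pderiv (F::real poly)) = poly F 1 - poly F 0"
  unfolding Ip_def by (rule integral_unique) (rule has_int_poly, simp)

lemma integrable_poly: "(\<lambda>x. poly (p::real poly) x) integrable_on {0..1}"
  using has_int_poly[OF pderiv_Ap[of p]] by (rule has_integral_integrable)

lemma Ip_eq: "Ip p = poly (Ap p) 1"
  using Ip_deriv[of "Ap p"] by (simp add: pderiv_Ap poly_Ap_0)

lemma Ip_add: "Ip (p + q) = Ip p + Ip q"
  unfolding Ip_def poly_add by (rule integral_add[OF integrable_poly integrable_poly])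

lemma Ip_diff: "Ip (p - q) = Ip p - Ip q"
  unfolding Ip_def poly_diff by (rule integral_diff[OF integrable_poly integrable_poly])

lemma Ip_smult: "Ip (smult c p) = c * Ip p"
  unfolding Ip_def poly_smult by (rule integral_mult_right)

lemma Ip_0: "Ip 0 = 0"
  by (simp add: Ip_def)

lemma Ip_sum: "finite A \<Longrightarrow> Ip (\<Sum>i\<in>A. f i) = (\<Sum>i\<in>A. Ip (f i))"
  by (induction A rule: finite_induct) (simp_all add: Ip_0 Ip_add)

lemma Ip_parts: "Ip (pderiv f * (g::real poly)) = poly f 1 * poly g 1 - poly f 0 * poly g 0 - Ip (f * pderiv g)"
proof -
  have "Ip (pderiv (f * g)) = poly f 1 * poly g 1 - poly f 0 * poly g 0"
    by (simp add: Ip_deriv)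
  moreover have "Ip (pderiv (f * g)) = Ip (f * pderiv g) + Ip (pderiv f * g)"
    by (simp add: pderiv_mult Ip_add mult.commute)
  ultimately show ?thesis by simp
qed

lemma Ip_monom: "Ip (monom 1 a) = 1 / real (Suc a)"
proof -
  have "pderiv (monom (1 / real (Suc a)) (Suc a)) = monom 1 a"
    by (simp add: pderiv_monom del: of_nat_Suc)
  then have "Ip (monom 1 a) = poly (monom (1 / real (Suc a)) (Suc a)) 1 - poly (monom (1 / real (Suc a)) (Suc a)) 0"
    using Ip_deriv by metis
  then show ?thesis by (simp add: poly_monom)
qed

definition Qp :: "nat \<Rightarrow> real poly" where "Qp n = Ap (Lp n)"

lemma legP_fun: "legP n = (\<lambda>x. poly (Lp n) x)"
  by (rule ext) (rule legP_poly)

lemma intP_poly: "intP n c = poly (Qp n) c"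
proof -
  have "interval_lebesgue_integral lborel (ereal 0) (ereal c) (legP n) = poly (Qp n) c - poly (Qp n) 0"
    unfolding legP_fun
  proof (rule interval_integral_FTC_finite)
    show "continuous_on {min 0 c..max 0 c} (\<lambda>x. poly (Lp n) x)"
      by (intro continuous_intros)
    fix x
    have "DERIV (\<lambda>x. poly (Qp n) x) x :> poly (Lp n) x" using poly_DERIV[of "Qp n" x]
      by (simp add: Qp_def pderiv_Ap)
    then have "((\<lambda>x. poly (Qp n) x) has_real_derivative poly (Lp n) x) (at x within {min 0 c..max 0 c})"
      by (rule has_field_derivative_at_within)
    then show "((\<lambda>x. poly (Qp n) x) has_vector_derivative poly (Lp n) x) (at x within {min 0 c..max 0 c})"
      by (simp add: has_real_derivative_iff_has_vector_derivative)
  qed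
  then show ?thesis by (simp add: intP_def Qp_def poly_Ap_0)
qed



lemma dvd_pderiv: assumes "(p::real poly)^(Suc k) dvd f" shows "p^k dvd pderiv f"
proof -
  obtain g where g: "f = p^(Suc k) * g" using assms by (auto elim: dvdE)
  have "pderiv f = p^k * (smult (of_nat (Suc k)) (pderiv p) * g + p * pderiv g)"
    unfolding g pderiv_mult pderiv_power_Suc by (simp add: algebra_simps)
  then show ?thesis by simp
qed

lemma hpd_dvd: "j \<le> n \<Longrightarrow> [:0,-1,1:]^(n-j) dvd (pderiv^^j) (Wp n)"
proof (induction j)
  case 0 then show ?case by (simp add: Wp_def)
next
  case (Suc j)
  then have "[:0,-1,1:]^(Suc (n - Suc j)) dvd (pderiv^^j) (Wp n)"
    by (simp add: Suc_diff_Suc)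
  then show ?case by (simp add: dvd_pderiv)
qed

lemma hpd_vanish:
  assumes "j < n"
  shows "poly ((pderiv^^j) (Wp n)) 0 = 0" "poly ((pderiv^^j) (Wp n)) 1 = 0"
proof -
  obtain r where r: "(pderiv^^j) (Wp n) = [:0,-1,1:]^(n-j) * r"
    using hpd_dvd[of j n] assms by (auto elim: dvdE)
  have nz: "n - j \<noteq> 0" using assms by simp
  show "poly ((pderiv^^j) (Wp n)) 0 = 0" "poly ((pderiv^^j) (Wp n)) 1 = 0"
    unfolding r using nz by (simp_all add: zero_power)
qed

lemma rod_parts: "j \<le> n \<Longrightarrow> Ip ((pderiv^^j) (Wp n) * g) = (-1)^j * Ip (Wp n * (pderiv^^j) g)"
proof (induction j arbitrary: g)
  case 0 then show ?case by simp
next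
  case (Suc j)
  have jn: "j < n" using Suc by simp
  have "Ip ((pderiv^^Suc j) (Wp n) * g) = Ip (pderiv ((pderiv^^j) (Wp n)) * g)" by simp
  also have "\<dots> = - Ip ((pderiv^^j) (Wp n) * pderiv g)"
    unfolding Ip_parts using hpd_vanish[OF jn] by simp
  also have "\<dots> = - ((-1)^j * Ip (Wp n * (pderiv^^j) (pderiv g)))"
    using Suc by simp
  also have "(pderiv^^j) (pderiv g) = (pderiv^^Suc j) g"
    by (simp add: funpow_Suc_right del: funpow.simps)
  finally show ?case by simp
qed

lemma hpd_zero: "(\<forall>k\<ge>n. coeff q k = 0) \<Longrightarrow> (pderiv^^n) q = 0"
  by (simp add: poly_eq_iff coeff_hpd)

lemma Ip_Lp_orth: "(\<forall>k\<ge>n. coeff q k = 0) \<Longrightarrow> Ip (Lp n * q) = 0"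
proof -
  assume h: "\<forall>k\<ge>n. coeff q k = 0"
  have "Ip (Lp n * q) = cn n * Ip (Rp n * q)" by (simp add: Lp_def Ip_smult)
  also have "Ip (Rp n * q) = (-1)^n * Ip (Wp n * (pderiv^^n) q)"
    unfolding Rp_def by (rule rod_parts) simp
  also have "(pderiv^^n) q = 0" using h by (rule hpd_zero)
  finally show ?thesis by (simp add: Ip_0)
qed

lemma beta_Ip: "Ip (monom 1 a * [:-1,1:]^b) = (-1)^b * fact a * fact b / fact (a+b+1)"
proof (induction b arbitrary: a)
  case 0 then show ?case by (simp add: Ip_monom)
next
  case (Suc b)
  define f where "f = monom (1 / real (Suc a)) (Suc a)"
  have pf: "pderiv f = monom 1 a" by (simp add: f_def pderiv_monom del: of_nat_Suc)
  have pg: "pderiv ([:-1,1:]^Suc b) = smult (of_nat (Suc b)) ([:-1::real,1:]^b)"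
    by (simp add: pderiv_power_Suc pderiv_pCons del: power_Suc)
  define g where "g = [:-1::real,1:]^Suc b"
  have g1: "poly g 1 = 0" by (simp add: g_def)
  have f0: "poly f 0 = 0" by (simp add: f_def poly_monom)
  have "Ip (monom 1 a * g) = - Ip (f * pderiv g)"
    using Ip_parts[of f g] pf g1 f0 by simp
  also have "f * pderiv g = smult (real (Suc b) / real (Suc a)) (monom 1 (Suc a) * [:-1,1:]^b)"
  proof -
    have m: "f = smult (1/real(Suc a)) (monom 1 (Suc a))" by (simp add: smult_monom f_def)
    have "f * pderiv g = smult (real (Suc b) * (1/real(Suc a))) (monom 1 (Suc a) * [:-1,1:]^b)"
      unfolding m pg g_def by (simp only: mult_smult_left mult_smult_right smult_smult mult.commute)
    then show ?thesis by simp
  qed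
  finally have "Ip (monom 1 a * [:-1,1:]^Suc b) = - Ip (smult (real (Suc b) / real (Suc a)) (monom 1 (Suc a) * [:-1,1:]^b))"
    by (simp add: g_def)
  also have "\<dots> = - (real (Suc b) / real (Suc a)) * ((-1)^b * fact (Suc a) * fact b / fact (Suc a + b + 1))"
    by (simp add: Ip_smult Suc del: of_nat_Suc)
  also have "\<dots> = (-1)^Suc b * fact a * fact (Suc b) / fact (a + Suc b + 1)"
  proof -
    have e: "fact (Suc a + b + 1) = (fact (a + Suc b + 1) :: real)" 
      "fact (Suc a) = real (Suc a) * (fact a::real)" "fact (Suc b) = real (Suc b) * (fact b::real)"
      by (simp_all only: fact_Suc add_Suc add_Suc_right of_nat_Suc)
    have gen: "- (B / A) * (s * (A * x) * y / F) = (-1 * s) * x * (B * y) / F" if "A \<noteq> 0" for A B s x y F :: real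
      using that by (simp add: field_simps)
    show ?thesis unfolding e power_Suc by (rule gen) simp
  qed
  finally show ?case .
qed

lemma hpd_monom: "(pderiv^^n) (monom 1 n) = [:fact n:]"
  by (auto simp: poly_eq_iff coeff_hpd coeff_monom coeff_pCons split: nat.split simp flip: pochhammer_fact)

lemma Ip_Lp_monom: "Ip (Lp n * monom 1 n) = sqrt (2 * real n + 1) * fact n * fact n / fact (2*n+1)"
proof -
  have "Ip (Lp n * monom 1 n) = cn n * Ip (Rp n * monom 1 n)" by (simp add: Lp_def Ip_smult)
  also have "Ip (Rp n * monom 1 n) = (-1)^n * Ip (Wp n * (pderiv^^n) (monom 1 n))"
    unfolding Rp_def by (rule rod_parts) simp
  also have "Wp n * (pderiv^^n) (monom 1 n) = smult (fact n) (monom 1 n * [:-1,1:]^n)"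
  proof -
    have "Wp n * (pderiv^^n) (monom 1 n) = Wp n * [:fact n:]" by (simp only: hpd_monom)
    also have "\<dots> = smult (fact n) (Wp n)" by simp
    finally show ?thesis by (simp only: Wp_alt)
  qed
  also have "Ip \<dots> = fact n * ((-1)^n * fact n * fact n / fact (2*n+1))"
  proof -
    have e: "n + n + 1 = 2*n+1" by simp
    show ?thesis by (simp only: Ip_smult beta_Ip e)
  qed
  finally have "Ip (Lp n * monom 1 n) = cn n * ((-1)^n * (fact n * ((-1)^n * fact n * fact n / fact (2*n+1))))" .
  also have "\<dots> = sqrt (2 * real n + 1) * fact n * fact n / fact (2*n+1)"
  proof -
    have ee: "((-1::real)^n * (-1)^n) = 1" by (simp flip: power_mult_distrib)
    have gen: "s / a * (e * (a * (e * a * a / F))) = s * a * a / F" if "e * e = 1" "a \<noteq> 0" for s a e F :: real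
    proof -
      have "s / a * (e * (a * (e * a * a / F))) = (e * e) * (s * a * a / F)" using that(2) by (simp add: field_simps)
      then show ?thesis using that(1) by simp
    qed
    show ?thesis unfolding cn_def by (rule gen[OF ee]) simp
  qed
  finally show ?thesis .
qed

lemma decomp:
  fixes q :: "real poly"
  assumes "degree q \<le> n"
  shows "\<forall>k\<ge>n. coeff (q - smult (coeff q n) (monom 1 n)) k = 0"
proof (intro allI impI)
  fix k assume k: "k \<ge> n"
  show "coeff (q - smult (coeff q n) (monom 1 n)) k = 0"
  proof (cases "k = n")
    case True then show ?thesis by (simp add: coeff_monom)
  next
    case False then have "k > n" using k by simp
    then show ?thesis using assms by (simp add: coeff_monom coeff_eq_0)
  qed
qed

lemma Ip_Lp_deg:
  assumes "degree q \<le> n"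
  shows "Ip (Lp n * q) = coeff q n / lcL n"
proof -
  define r where "r = q - smult (coeff q n) (monom 1 n)"
  have q: "q = smult (coeff q n) (monom 1 n) + r" by (simp add: r_def)
  have "Ip (Lp n * q) = coeff q n * Ip (Lp n * monom 1 n) + Ip (Lp n * r)"
    by (subst q) (simp add: algebra_simps Ip_add Ip_smult)
  also have "Ip (Lp n * r) = 0" using decomp[OF assms] unfolding r_def[symmetric] by (rule Ip_Lp_orth)
  also have "coeff q n * Ip (Lp n * monom 1 n) = coeff q n / lcL n"
  proof -
    have f: "fact (2*n+1) = (real (2*n+1)) * fact (2*n)" by simp
    have s: "sqrt (2 * real n + 1) * sqrt (2 * real n + 1) = 2 * real n + 1" by simp
    have gen: "s * a * a / (d * b) * (s * b / (a * a)) = 1"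
      if "a \<noteq> 0" "b \<noteq> 0" "d \<noteq> 0" "s * s = d" for a b d s :: real
    proof -
      have "s * a * a / (d * b) * (s * b / (a * a)) = (s * s) / d" using that by (simp add: field_simps)
      then show ?thesis using that by simp
    qed
    have "Ip (Lp n * monom 1 n) * lcL n = 1"
      unfolding Ip_Lp_monom lcL_def f of_nat_add of_nat_mult of_nat_1 of_nat_numeral
      by (rule gen) (simp_all add: s)
    then show ?thesis using lcL_pos[of n] by (simp add: field_simps)
  qed
  finally show ?thesis by simp
qed

lemma Ip_LL: "Ip (Lp i * Lp j) = (if i = j then 1 else 0)"
proof -
  have *: "Ip (Lp i * Lp j) = 0" if "j < i" for i j
    using that by (intro Ip_Lp_orth) (auto simp: coeff_Lp_gt)
  show ?thesis
  proof (cases "i = j")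
    case True then show ?thesis using Ip_Lp_deg[OF degree_Lp, of i] lcL_pos[of i]
      by (simp add: coeff_Lp_n)
  next
    case False
    show ?thesis
    proof (cases "i < j")
      case True then show ?thesis using *[of i j] by (simp add: mult.commute)
    next
      case False then have "j < i" using \<open>i \<noteq> j\<close> by simp
      then show ?thesis using *[of j i] by simp
    qed
  qed
qed



lemma Qp_0: "poly (Qp n) 0 = 0" by (simp add: Qp_def poly_Ap_0)

lemma Ip_const: "Ip [:c:] = c"
proof -
  have "[:c:] = smult c (monom 1 0)" by (simp add: monom_0)
  moreover have "Ip (smult c (monom 1 0)) = c" by (simp only: Ip_smult Ip_monom)
  ultimately show ?thesis by simp
qed

lemma Ip_Lp: "Ip (Lp n) = (if n = 0 then 1 else 0)"
  using Ip_LL[of n 0] by (simp add: Lp_0)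

lemma Qp_1: "poly (Qp n) 1 = (if n = 0 then 1 else 0)"
  using Ip_eq[of "Lp n"] Ip_Lp[of n] by (simp add: Qp_def)

lemma pderiv_Qp: "pderiv (Qp n) = Lp n" by (simp add: Qp_def pderiv_Ap)

lemma degree_Qp: "degree (Qp n) \<le> Suc n"
  using degree_Ap[of "Lp n"] degree_Lp[of n] unfolding Qp_def by linarith

lemma coeff_Qp: "coeff (Qp n) (Suc n) = lcL n / real (Suc n)"
  by (simp add: Qp_def coeff_Ap_Suc coeff_Lp_n del: of_nat_Suc)

lemma coeff_Qp_gt: "k > Suc n \<Longrightarrow> coeff (Qp n) k = 0"
  using degree_Qp[of n] by (simp add: coeff_eq_0)

lemma xi_0: "xi 0 = 1/2" by (simp add: xi_def)

lemma ratio_xi: "lcL j / (real (Suc j) * lcL (Suc j)) = xi (Suc j)"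
proof -
  define a where "a = (fact j :: real)"
  define b where "b = (fact (2*j) :: real)"
  define S1 where "S1 = sqrt (2 * real j + 1)"
  define S3 where "S3 = sqrt (2 * real j + 3)"
  define m where "m = real (Suc j)"
  define t where "t = 2 * real j + 1"
  have a: "a > 0" "b > 0" unfolding a_def b_def by simp_all
  have S: "S1 > 0" "S3 > 0" "S1 * S1 = t" "t > 0" unfolding S1_def S3_def t_def by simp_all
  have m: "m > 0" unfolding m_def by simp
  have f1: "fact (Suc j) = m * a" unfolding m_def a_def by simp
  have f2: "fact (2 * Suc j) = (2*m) * (t * b)" unfolding m_def t_def b_def
    by (simp add: algebra_simps)
  have l1: "lcL j = S1 * b / (a * a)" unfolding lcL_def S1_def a_def b_def ..
  have l2: "lcL (Suc j) = S3 * ((2*m) * (t * b)) / ((m * a) * (m * a))"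
    unfolding lcL_def f1 f2 S3_def by (simp add: algebra_simps)
  have x: "xi (Suc j) = 1 / (2 * (S1 * S3))"
  proof -
    have "\<bar>4 * (real (Suc j))^2 - 1\<bar> = (2 * real j + 1) * (2 * real j + 3)"
      by (simp add: power2_eq_square algebra_simps)
    then show ?thesis unfolding xi_def S1_def S3_def by (simp add: real_sqrt_mult)
  qed
  have "S1 * b / (a * a) / (m * (S3 * ((2*m) * (t * b)) / ((m * a) * (m * a)))) = S1 / (2 * S3 * t)"
    using a S m by (simp add: field_simps)
  also have "\<dots> = 1 / (2 * (S1 * S3))" using S by (simp add: field_simps)
  finally show ?thesis unfolding l1 l2 x m_def .
qed

lemma Ip_LQ_diag: "Ip (Lp i * Qp i) = (if i = 0 then 1/2 else 0)"
proof -
  have "Ip (pderiv (Qp i) * Qp i) = poly (Qp i) 1 * poly (Qp i) 1 - poly (Qp i) 0 * poly (Qp i) 0 - Ip (Qp i * pderiv (Qp i))"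
    by (rule Ip_parts)
  then have "2 * Ip (Lp i * Qp i) = poly (Qp i) 1 * poly (Qp i) 1"
    by (simp add: pderiv_Qp Qp_0 mult.commute)
  then show ?thesis by (cases "i = 0") (simp_all add: Qp_1)
qed

lemma Ip_LQ_below: "i > Suc j \<Longrightarrow> Ip (Lp i * Qp j) = 0"
  by (rule Ip_Lp_orth) (auto intro: coeff_Qp_gt)

lemma Ip_LQ_sub: "Ip (Lp (Suc j) * Qp j) = xi (Suc j)"
proof -
  have "Ip (Lp (Suc j) * Qp j) = coeff (Qp j) (Suc j) / lcL (Suc j)"
    by (rule Ip_Lp_deg) (rule degree_Qp)
  also have "\<dots> = xi (Suc j)" unfolding coeff_Qp ratio_xi[symmetric] by simp
  finally show ?thesis .
qed

lemma Ip_LQ_swap: "j \<noteq> 0 \<Longrightarrow> Ip (Lp i * Qp j) = - Ip (Lp j * Qp i)"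
proof -
  assume j: "j \<noteq> 0"
  have "Ip (pderiv (Qp i) * Qp j) = poly (Qp i) 1 * poly (Qp j) 1 - poly (Qp i) 0 * poly (Qp j) 0 - Ip (Qp i * pderiv (Qp j))"
    by (rule Ip_parts)
  then show ?thesis using j by (simp add: pderiv_Qp Qp_0 Qp_1 mult.commute)
qed

lemma Ip_LQ: "Ip (Lp i * Qp j) = Xmat i j"
proof -
  consider "i = j" | "i = Suc j" | "j = Suc i" | "i > Suc j" | "j > Suc i" by linarith
  then show ?thesis
  proof cases
    case 1 then show ?thesis by (simp add: Ip_LQ_diag Xmat_def xi_0)
  next
    case 2 then show ?thesis by (simp add: Ip_LQ_sub Xmat_def)
  next
    case 3 then show ?thesis by (simp add: Ip_LQ_swap Ip_LQ_sub Xmat_def)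
  next
    case 4 then show ?thesis by (simp add: Ip_LQ_below Xmat_def)
  next
    case 5 then show ?thesis by (simp add: Ip_LQ_swap Ip_LQ_below Xmat_def)
  qed
qed

lemma span_Lp:
  fixes q :: "real poly"
  shows "degree q \<le> n \<Longrightarrow> q = (\<Sum>j\<le>n. smult (Ip (Lp j * q)) (Lp j))"
proof (induction n arbitrary: q)
  case 0
  then have q: "q = [:coeff q 0:]" by (metis degree_0_id le_zero_eq)
  have "Ip (Lp 0 * q) = coeff q 0" by (subst q) (simp add: Lp_0 Ip_const)
  then show ?case by (subst (1) q) (simp add: Lp_0)
next
  case (Suc n)
  define \<alpha> where "\<alpha> = Ip (Lp (Suc n) * q)"
  have al: "\<alpha> = coeff q (Suc n) / lcL (Suc n)" unfolding \<alpha>_def by (rule Ip_Lp_deg) (rule Suc.prems)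
  define r where "r = q - smult \<alpha> (Lp (Suc n))"
  have "degree r \<le> n"
  proof (rule degree_le, intro allI impI)
    fix k assume k: "n < k"
    show "coeff r k = 0"
    proof (cases "k = Suc n")
      case True then show ?thesis using lcL_pos[of "Suc n"] by (simp add: r_def al coeff_Lp_n)
    next
      case False then have "k > Suc n" using k by simp
      then show ?thesis using Suc.prems by (simp add: r_def coeff_Lp_gt coeff_eq_0)
    qed
  qed
  then have r: "r = (\<Sum>j\<le>n. smult (Ip (Lp j * r)) (Lp j))" by (rule Suc.IH)
  have "Ip (Lp j * r) = Ip (Lp j * q)" if "j \<le> n" for j
    using that by (simp add: r_def algebra_simps Ip_diff Ip_smult Ip_LL)
  then have r2: "r = (\<Sum>j\<le>n. smult (Ip (Lp j * q)) (Lp j))" using r by simp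
  have "q = r + smult \<alpha> (Lp (Suc n))" by (simp add: r_def)
  also have "\<dots> = (\<Sum>j\<le>Suc n. smult (Ip (Lp j * q)) (Lp j))" by (simp add: r2 \<alpha>_def)
  finally show ?case .
qed



lemma poly_rolle:
  fixes p :: "real poly"
  assumes "a < b" "poly p a = 0" "poly p b = 0"
  shows "\<exists>z. a < z \<and> z < b \<and> poly (pderiv p) z = 0"
proof -
  have "\<exists>z. a < z \<and> z < b \<and> DERIV (poly p) z :> 0"
  proof (rule Rolle)
    show "continuous_on {a..b} (poly p)" by (intro continuous_intros)
    fix x show "poly p differentiable (at x)" using poly_DERIV real_differentiable_def by blast
  qed (use assms in auto)
  then obtain z where z: "a < z" "z < b" "DERIV (poly p) z :> 0" by blast
  have "DERIV (poly p) z :> poly (pderiv p) z" by (rule poly_DERIV)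
  then have "poly (pderiv p) z = 0" using z(3) DERIV_unique by blast
  then show ?thesis using z by blast
qed

lemma rolle_count:
  fixes p :: "real poly"
  shows "finite S \<Longrightarrow> card S = Suc m \<Longrightarrow> (\<forall>x\<in>S. poly p x = 0) \<Longrightarrow>
    \<exists>T. finite T \<and> card T = m \<and> T \<subseteq> {Min S<..<Max S} \<and> (\<forall>x\<in>T. poly (pderiv p) x = 0)"
proof (induction m arbitrary: S)
  case 0 then show ?case by (intro exI[of _ "{}"]) auto
next
  case (Suc m)
  define a where "a = Min S"
  define S' where "S' = S - {a}"
  have Sne: "S \<noteq> {}" using Suc.prems by auto
  have aS: "a \<in> S" unfolding a_def using Suc.prems Sne by simp
  have fS': "finite S'" "card S' = Suc m" using Suc.prems aS by (simp_all add: S'_def)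
  have S'ne: "S' \<noteq> {}" using fS' by auto
  obtain T' where T': "finite T'" "card T' = m" "T' \<subseteq> {Min S'<..<Max S'}" "\<forall>x\<in>T'. poly (pderiv p) x = 0"
    using Suc.IH[OF fS'] Suc.prems(3) by (auto simp: S'_def)
  define b where "b = Min S'"
  have bS': "b \<in> S'" unfolding b_def using fS' S'ne by simp
  then have bS: "b \<in> S" "b \<noteq> a" by (auto simp: S'_def)
  have "a \<le> b" unfolding a_def using Suc.prems(1) bS by simp
  then have ab: "a < b" using bS by simp
  obtain z where z: "a < z" "z < b" "poly (pderiv p) z = 0"
    using poly_rolle[OF ab] Suc.prems(3) aS bS by blast
  have zT: "z \<notin> T'" using T'(3) z(2) unfolding b_def by auto
  have maxle: "Max S' \<le> Max S" using fS' S'ne Suc.prems(1) by (auto simp: S'_def)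
  have minle: "Min S \<le> Min S'" using fS' S'ne Suc.prems(1) by (auto simp: S'_def)
  have bmax: "b \<le> Max S" using bS Suc.prems(1) by simp
  show ?case
  proof (intro exI[of _ "insert z T'"] conjI)
    show "finite (insert z T')" using T' by simp
    show "card (insert z T') = Suc m" using T' zT by simp
    show "insert z T' \<subseteq> {Min S<..<Max S}"
      using T'(3) z maxle minle bmax unfolding a_def by auto
    show "\<forall>x\<in>insert z T'. poly (pderiv p) x = 0" using T'(4) z by auto
  qed
qed

lemma hpd_roots: "j \<le> n \<Longrightarrow> \<exists>T. finite T \<and> card T = j \<and> T \<subseteq> {0<..<1} \<and>
   (\<forall>x\<in>T. poly ((pderiv^^j) (Wp n)) x = 0)"
proof (induction j)
  case 0 then show ?case by (intro exI[of _ "{}"]) auto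
next
  case (Suc j)
  then have jn: "j < n" by simp
  then obtain T where T: "finite T" "card T = j" "T \<subseteq> {0<..<1}" "\<forall>x\<in>T. poly ((pderiv^^j) (Wp n)) x = 0"
    using Suc by auto
  define S where "S = insert 0 (insert (1::real) T)"
  have fS: "finite S" using T by (simp add: S_def)
  have n01: "0 \<notin> T" "1 \<notin> T" using T(3) by auto
  have cS: "card S = Suc (Suc j)" using T n01 by (simp add: S_def)
  have zS: "\<forall>x\<in>S. poly ((pderiv^^j) (Wp n)) x = 0" using T hpd_vanish[OF jn] by (auto simp: S_def)
  have mn: "Min S = 0" using T fS by (intro Min_eqI) (auto simp: S_def)
  have mx: "Max S = 1" using T fS by (intro Max_eqI) (auto simp: S_def)
  obtain T' where "finite T'" "card T' = Suc j" "T' \<subseteq> {Min S<..<Max S}"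
    "\<forall>x\<in>T'. poly (pderiv ((pderiv^^j) (Wp n))) x = 0"
    using rolle_count[OF fS cS zS] by blast
  then show ?case using mn mx by (intro exI[of _ T']) auto
qed

definition RS :: "nat \<Rightarrow> real set" where "RS s = {x. legP s x = 0}"

lemma Lp_nz: "Lp n \<noteq> 0"
  using coeff_Lp_n[of n] lcL_pos[of n] by auto

lemma degree_Lp_eq: "degree (Lp n) = n"
  using degree_Lp[of n] coeff_Lp_n[of n] lcL_pos[of n] by (metis le_antisym le_degree less_irrefl)

lemma RS_props: "finite (RS s)" "card (RS s) = s"
proof -
  have RS: "RS s = {x. poly (Lp s) x = 0}" by (simp add: RS_def legP_poly)
  show f: "finite (RS s)" unfolding RS by (rule poly_roots_finite[OF Lp_nz])
  obtain T where T: "finite T" "card T = s" "T \<subseteq> {0<..<1}" "\<forall>x\<in>T. poly (Rp s) x = 0"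
    using hpd_roots[of s s] by (auto simp: Rp_def)
  have "T \<subseteq> RS s" using T(4) by (auto simp: RS Lp_def)
  then have "s \<le> card (RS s)" using card_mono[OF f] T(2) by blast
  moreover have "card (RS s) \<le> s" unfolding RS using card_poly_roots_bound[OF Lp_nz] degree_Lp_eq by metis
  ultimately show "card (RS s) = s" by simp
qed

lemma node_root: "l < s \<Longrightarrow> poly (Lp s) (gl_node s l) = 0"
proof -
  assume l: "l < s"
  have "gl_node s l \<in> set (sorted_list_of_set (RS s))"
    unfolding gl_node_def RS_def[symmetric] using l RS_props by (intro nth_mem) (simp add: length_sorted_list_of_set)
  then have "gl_node s l \<in> RS s" using RS_props by simp
  then show ?thesis by (simp add: RS_def legP_poly)
qed

lemma node_inj: "l < s \<Longrightarrow> m < s \<Longrightarrow> gl_node s l = gl_node s m \<Longrightarrow> l = m"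
  unfolding gl_node_def RS_def[symmetric]
  using RS_props[of s] distinct_sorted_list_of_set[of "RS s"]
  by (simp add: nth_eq_iff_index_eq length_sorted_list_of_set)



definition Lag :: "nat \<Rightarrow> nat \<Rightarrow> real poly" where
  "Lag s l = (\<Prod>j\<in>{0..<s} - {l}. [:- gl_node s j / (gl_node s l - gl_node s j), 1 / (gl_node s l - gl_node s j):])"

lemma poly_Lag: "l < s \<Longrightarrow> poly (Lag s l) x = (\<Prod>j\<in>{0..<s} - {l}. (x - gl_node s j) / (gl_node s l - gl_node s j))"
  unfolding Lag_def poly_prod
proof (intro prod.cong refl)
  fix j assume "l < s" "j \<in> {0..<s} - {l}"
  then have "gl_node s l - gl_node s j \<noteq> 0" using node_inj[of l s j] by auto
  then show "poly [:- gl_node s j / (gl_node s l - gl_node s j), 1 / (gl_node s l - gl_node s j):] x =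
    (x - gl_node s j) / (gl_node s l - gl_node s j)" by (simp add: diff_divide_distrib)
qed

lemma weight_Lag: "l < s \<Longrightarrow> gl_weight s l = Ip (Lag s l)"
proof -
  assume l: "l < s"
  have "(\<lambda>x. poly (Lag s l) x) = (\<lambda>x. \<Prod>j\<in>{0..<s} - {l}. (x - gl_node s j) / (gl_node s l - gl_node s j))"
    by (rule ext) (rule poly_Lag[OF l])
  then show ?thesis unfolding gl_weight_def Ip_def by simp
qed

lemma Lag_node: "l < s \<Longrightarrow> m < s \<Longrightarrow> poly (Lag s l) (gl_node s m) = (if m = l then 1 else 0)"
proof -
  assume l: "l < s" and m: "m < s"
  show ?thesis
  proof (cases "m = l")
    case True
    have "poly (Lag s l) (gl_node s m) = (\<Prod>j\<in>{0..<s} - {l}. 1)"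
      unfolding poly_Lag[OF l] True
    proof (intro prod.cong refl)
      fix j assume "j \<in> {0..<s} - {l}"
      then have "gl_node s l - gl_node s j \<noteq> 0" using node_inj[of l s j] l by auto
      then show "(gl_node s l - gl_node s j) / (gl_node s l - gl_node s j) = 1" by simp
    qed
    then show ?thesis using True by simp
  next
    case False
    have "m \<in> {0..<s} - {l}" using m False by simp
    then show ?thesis unfolding poly_Lag[OF l] using False by (auto intro: prod_zero)
  qed
qed

lemma degree_Lag: "l < s \<Longrightarrow> degree (Lag s l) \<le> s - 1"
proof -
  assume "l < s"
  have "degree (Lag s l) \<le> sum (degree \<circ> (\<lambda>j. [:- gl_node s j / (gl_node s l - gl_node s j), 1 / (gl_node s l - gl_node s j):])) ({0..<s} - {l})"
    unfolding Lag_def by (rule degree_prod_sum_le) simp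
  also have "\<dots> \<le> sum (\<lambda>j. 1) ({0..<s} - {l})" by (intro sum_mono) simp
  also have "\<dots> \<le> s - 1" using \<open>l < s\<close> by (simp add: card_Diff_singleton)
  finally show ?thesis .
qed

lemma interp:
  fixes r :: "real poly"
  assumes "degree r \<le> s - 1" "s \<ge> 1"
  shows "r = (\<Sum>l<s. smult (poly r (gl_node s l)) (Lag s l))"
proof (rule ccontr)
  define d where "d = r - (\<Sum>l<s. smult (poly r (gl_node s l)) (Lag s l))"
  assume "r \<noteq> (\<Sum>l<s. smult (poly r (gl_node s l)) (Lag s l))"
  then have dnz: "d \<noteq> 0" by (simp add: d_def)
  have dd: "degree d \<le> s - 1" unfolding d_def
    by (intro degree_diff_le assms degree_sum_le) (auto intro: order_trans[OF degree_smult_le] dest: degree_Lag)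
  have root: "poly d (gl_node s m) = 0" if "m < s" for m
  proof -
    have "(\<Sum>l<s. poly r (gl_node s l) * poly (Lag s l) (gl_node s m)) = poly r (gl_node s m)"
      using that by (simp add: Lag_node if_distrib cong: if_cong)
    then show ?thesis by (simp add: d_def poly_sum)
  qed
  have "gl_node s ` {..<s} \<subseteq> {x. poly d x = 0}" using root by auto
  moreover have "card (gl_node s ` {..<s}) = s"
    by (subst card_image) (auto intro: inj_onI node_inj)
  ultimately have "s \<le> card {x. poly d x = 0}"
    using card_mono[OF poly_roots_finite[OF dnz]] by metis
  moreover have "card {x. poly d x = 0} \<le> s - 1" using card_poly_roots_bound[OF dnz] dd by linarith
  ultimately show False using assms(2) by linarith
qed

lemma gauss:
  fixes q :: "real poly"
  assumes s: "s \<ge> 1" and dq: "degree q \<le> 2 * s - 1"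
  shows "(\<Sum>l<s. gl_weight s l * poly q (gl_node s l)) = Ip q"
proof -
  define P where "P = Lp s"
  have Pnz: "P \<noteq> 0" by (simp add: P_def Lp_nz)
  have dP: "degree P = s" by (simp add: P_def degree_Lp_eq)
  define d where "d = q div P"
  define r where "r = q mod P"
  have qe: "q = d * P + r" by (simp add: d_def r_def)
  have dr: "degree r \<le> s - 1"
    using degree_mod_less[OF Pnz, of q] dP s by (auto simp: r_def)
  have dd: "degree d \<le> s - 1"
  proof (cases "d = 0")
    case True then show ?thesis by simp
  next
    case False
    have "degree (d * P) = degree d + s" using False Pnz dP by (simp add: degree_mult_eq)
    moreover have "d * P = q - r" using qe by simp
    moreover have "degree (q - r) \<le> 2 * s - 1" using dq dr by (intro degree_diff_le) auto
    ultimately have "degree d + s \<le> 2 * s - 1" by simp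
    then show ?thesis using s by arith
  qed
  have "Ip (P * d) = 0" unfolding P_def
    by (rule Ip_Lp_orth) (use dd s in \<open>auto intro: coeff_eq_0\<close>)
  then have Iq: "Ip q = Ip r" using qe by (simp add: Ip_add mult.commute)
  have pq: "poly q (gl_node s l) = poly r (gl_node s l)" if "l < s" for l
    using node_root[OF that] qe by (simp add: P_def)
  have "Ip r = (\<Sum>l<s. poly r (gl_node s l) * Ip (Lag s l))"
    by (subst interp[OF dr s]) (simp add: Ip_sum Ip_smult)
  also have "\<dots> = (\<Sum>l<s. gl_weight s l * poly q (gl_node s l))"
    by (intro sum.cong refl) (simp add: pq weight_Lag)
  finally show ?thesis using Iq by simp
qed



lemma mv_add_left: "((M::real^'m^'n) + N) *v x = M *v x + N *v x"
  by (simp add: vec_eq_iff matrix_vector_mult_def sum.distrib algebra_simps)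

lemma mv_scaleR_left: "(c *\<^sub>R (M::real^'m^'n)) *v x = c *\<^sub>R (M *v x)"
  by (simp add: vec_eq_iff matrix_vector_mult_def sum_distrib_left algebra_simps)

lemma mv_add_right: "(M::real^'m^'n) *v (x + y) = M *v x + M *v y"
  by (simp add: vec_eq_iff matrix_vector_mult_def sum.distrib algebra_simps)

lemma mv_scaleR_right: "(M::real^'m^'n) *v (c *\<^sub>R x) = c *\<^sub>R (M *v x)"
  by (simp add: vec_eq_iff matrix_vector_mult_def sum_distrib_left algebra_simps)

lemma mv_sum_left: "finite A \<Longrightarrow> (\<Sum>l\<in>A. (f l :: real^'m^'n)) *v x = (\<Sum>l\<in>A. f l *v x)"
  by (induction A rule: finite_induct) (simp_all add: mv_add_left)

lemma mv_sum_right: "finite A \<Longrightarrow> (M::real^'m^'n) *v (\<Sum>l\<in>A. f l) = (\<Sum>l\<in>A. M *v f l)"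
  by (induction A rule: finite_induct) (simp_all add: mv_add_right)

lemma vec_swap:
  fixes x :: "'b \<Rightarrow> 'v::real_vector"
  assumes "finite A" "finite B"
  shows "(\<Sum>l\<in>A. a l *\<^sub>R (p + h *\<^sub>R (\<Sum>j\<in>B. b l j *\<^sub>R x j))) =
         (\<Sum>l\<in>A. a l) *\<^sub>R p + h *\<^sub>R (\<Sum>j\<in>B. (\<Sum>l\<in>A. a l * b l j) *\<^sub>R x j)"
proof -
  have "(\<Sum>l\<in>A. a l *\<^sub>R (p + h *\<^sub>R (\<Sum>j\<in>B. b l j *\<^sub>R x j))) =
        (\<Sum>l\<in>A. a l *\<^sub>R p) + (\<Sum>l\<in>A. \<Sum>j\<in>B. (h * (a l * b l j)) *\<^sub>R x j)"
    by (simp add: scaleR_add_right sum.distrib scaleR_sum_right mult_ac)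
  also have "(\<Sum>l\<in>A. \<Sum>j\<in>B. (h * (a l * b l j)) *\<^sub>R x j) = (\<Sum>j\<in>B. \<Sum>l\<in>A. (h * (a l * b l j)) *\<^sub>R x j)"
    by (rule sum.swap)
  also have "\<dots> = h *\<^sub>R (\<Sum>j\<in>B. (\<Sum>l\<in>A. a l * b l j) *\<^sub>R x j)"
    by (simp add: scaleR_sum_right scaleR_sum_left)
  finally show ?thesis by (simp add: scaleR_sum_left)
qed

definition vp :: "(real \<Rightarrow> real^'m) \<Rightarrow> bool" where
  "vp f \<longleftrightarrow> (\<forall>k. \<exists>p. \<forall>t. f t $ k = poly p t)"

lemma vp_ext:
  assumes "vp f" "vp g" "\<forall>c\<in>{0..1}. f c = g c"
  shows "f c = g c"
proof -
  have "f c $ k = g c $ k" for k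
  proof -
    obtain p where p: "\<forall>t. f t $ k = poly p t" using assms(1) unfolding vp_def by blast
    obtain q where q: "\<forall>t. g t $ k = poly q t" using assms(2) unfolding vp_def by blast
    have "p - q = 0"
    proof (rule ccontr)
      assume nz: "p - q \<noteq> 0"
      have "{0..1::real} \<subseteq> {x. poly (p - q) x = 0}"
      proof
        fix x :: real assume x: "x \<in> {0..1}"
        have "poly p x = f x $ k" using p by simp
        also have "\<dots> = g x $ k" using assms(3) x by simp
        also have "\<dots> = poly q x" using q by simp
        finally show "x \<in> {x. poly (p - q) x = 0}" by simp
      qed
      then have "finite {0..1::real}" using poly_roots_finite[OF nz] finite_subset by blast
      then show False using infinite_Icc[of "0::real" 1] by simp
    qed
    then show ?thesis using p q by simp
  qed
  then show ?thesis by (simp add: vec_eq_iff)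
qed

lemma vp_isv: "is_vpoly n u \<Longrightarrow> vp (\<lambda>c. u (c * h))"
  unfolding is_vpoly_def vp_def
proof (elim exE, intro allI)
  fix a :: "nat \<Rightarrow> real^'a" and k assume a: "\<forall>t. u t = (\<Sum>j\<le>n. t ^ j *\<^sub>R a j)"
  show "\<exists>p. \<forall>t. u (t * h) $ k = poly p t"
    by (rule exI[of _ "\<Sum>j\<le>n. monom (h^j * a j $ k) j"])
       (simp add: a poly_sum poly_monom power_mult_distrib mult_ac)
qed

lemma vp_form: "finite I \<Longrightarrow> vp (\<lambda>c. x0 + h *\<^sub>R (\<Sum>i\<in>I. poly (p i) c *\<^sub>R (g i :: real^'m)))"
  unfolding vp_def
proof (intro allI)
  fix k assume "finite I"
  show "\<exists>q. \<forall>t. (x0 + h *\<^sub>R (\<Sum>i\<in>I. poly (p i) t *\<^sub>R g i)) $ k = poly q t"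
    by (rule exI[of _ "[:x0 $ k:] + smult h (\<Sum>i\<in>I. smult (g i $ k) (p i))"])
       (simp add: poly_sum mult_ac)
qed

lemma isv_form:
  fixes g :: "nat \<Rightarrow> real^'m"
  assumes "\<forall>i\<in>I. degree (p i) \<le> n" "finite I"
  shows "is_vpoly n (\<lambda>t. x0 + h *\<^sub>R (\<Sum>i\<in>I. poly (p i) (t / h) *\<^sub>R g i))"
  unfolding is_vpoly_def
proof (intro exI allI)
  fix t
  define a where "a j = (if j = 0 then x0 else 0) + h *\<^sub>R (\<Sum>i\<in>I. (coeff (p i) j / h^j) *\<^sub>R g i)" for j
  have "(\<Sum>j\<le>n. t ^ j *\<^sub>R a j) = (\<Sum>j\<le>n. t ^ j *\<^sub>R (if j = 0 then x0 else 0)) +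
      (\<Sum>j\<le>n. t ^ j *\<^sub>R (h *\<^sub>R (\<Sum>i\<in>I. (coeff (p i) j / h^j) *\<^sub>R g i)))"
    by (simp add: a_def scaleR_add_right sum.distrib)
  also have "(\<Sum>j\<le>n. t ^ j *\<^sub>R (if j = 0 then x0 else 0)) = x0"
    by (simp add: if_distrib[of "\<lambda>x. t ^ _ *\<^sub>R x"] cong: if_cong)
  also have "(\<Sum>j\<le>n. t ^ j *\<^sub>R (h *\<^sub>R (\<Sum>i\<in>I. (coeff (p i) j / h^j) *\<^sub>R g i)))
       = h *\<^sub>R (\<Sum>i\<in>I. (\<Sum>j\<le>n. coeff (p i) j * (t/h)^j) *\<^sub>R g i)"
    by (simp add: scaleR_sum_right scaleR_sum_left sum.swap[of _ "{..n}" I] power_divide mult_ac)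
  also have "\<dots> = h *\<^sub>R (\<Sum>i\<in>I. poly (p i) (t / h) *\<^sub>R g i)"
    by (intro arg_cong[where f="\<lambda>z. h *\<^sub>R z"] sum.cong refl) (use assms(1) in \<open>auto simp: poly_upto\<close>)
  finally show "x0 + h *\<^sub>R (\<Sum>i\<in>I. poly (p i) (t / h) *\<^sub>R g i) = (\<Sum>j\<le>n. t ^ j *\<^sub>R a j)" by simp
qed



lemma vec_swap2:
  fixes x :: "'b \<Rightarrow> 'v::real_vector"
  assumes "finite A" "finite B"
  shows "(\<Sum>l\<in>A. a l *\<^sub>R (p l + h *\<^sub>R (\<Sum>j\<in>B. b l j *\<^sub>R x j))) =
         (\<Sum>l\<in>A. a l *\<^sub>R p l) + h *\<^sub>R (\<Sum>j\<in>B. (\<Sum>l\<in>A. a l * b l j) *\<^sub>R x j)"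
proof -
  have "(\<Sum>l\<in>A. a l *\<^sub>R (p l + h *\<^sub>R (\<Sum>j\<in>B. b l j *\<^sub>R x j))) =
        (\<Sum>l\<in>A. a l *\<^sub>R p l) + (\<Sum>l\<in>A. \<Sum>j\<in>B. (h * (a l * b l j)) *\<^sub>R x j)"
    by (simp add: scaleR_add_right sum.distrib scaleR_sum_right mult_ac)
  also have "(\<Sum>l\<in>A. \<Sum>j\<in>B. (h * (a l * b l j)) *\<^sub>R x j) = (\<Sum>j\<in>B. \<Sum>l\<in>A. (h * (a l * b l j)) *\<^sub>R x j)"
    by (rule sum.swap)
  also have "\<dots> = h *\<^sub>R (\<Sum>j\<in>B. (\<Sum>l\<in>A. a l * b l j) *\<^sub>R x j)"
    by (simp add: scaleR_sum_right scaleR_sum_left)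
  finally show ?thesis .
qed

lemma sum_if0: "0 < (s::nat) \<Longrightarrow> (\<Sum>i<s. a i *\<^sub>R (if i = 0 then p0 else (0::'v::real_vector))) = a 0 *\<^sub>R p0"
proof -
  assume s: "0 < s"
  have "(\<Sum>i<s. a i *\<^sub>R (if i = 0 then p0 else (0::'v))) = (\<Sum>i<s. if i = 0 then a 0 *\<^sub>R p0 else 0)"
    by (intro sum.cong) auto
  also have "\<dots> = a 0 *\<^sub>R p0" by (subst sum.delta) (use s in auto)
  finally show ?thesis .
qed

lemma legP0: "legP 0 x = 1" by (simp add: legP_poly Lp_0)

lemma intP0: "intP 0 c = c"
proof -
  have "Ap 1 = monom 1 1" by (simp add: Ap_def)
  then show ?thesis by (simp add: intP_poly Qp_def Lp_0 poly_monom)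
qed

lemma quad_L:
  assumes "1 \<le> s" "i < s"
  shows "(\<Sum>l<s. gl_weight s l * legP i (gl_node s l)) = (if i = 0 then 1 else 0)"
proof -
  have "(\<Sum>l<s. gl_weight s l * legP i (gl_node s l)) = Ip (Lp i)"
    unfolding legP_poly by (rule gauss) (use assms degree_Lp[of i] in auto)
  then show ?thesis by (simp add: Ip_Lp)
qed

lemma quad_LQ:
  assumes "1 \<le> s" "i < s" "j < s"
  shows "(\<Sum>l<s. gl_weight s l * legP i (gl_node s l) * intP j (gl_node s l)) = Xmat i j"
proof -
  have d: "degree (Lp i * Qp j) \<le> 2 * s - 1"
    using degree_mult_le[of "Lp i" "Qp j"] degree_Lp[of i] degree_Qp[of j] assms by linarith
  have "(\<Sum>l<s. gl_weight s l * legP i (gl_node s l) * intP j (gl_node s l)) = Ip (Lp i * Qp j)"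
    using gauss[OF assms(1) d] by (simp add: legP_poly intP_poly mult.assoc)
  then show ?thesis by (simp add: Ip_LQ)
qed

lemma node_expand:
  assumes "m < s" "l < s"
  shows "(\<Sum>j<s. legP j (gl_node s l) * Xmat j m) = intP m (gl_node s l)"
proof -
  have "Qp m = (\<Sum>j\<le>s. smult (Ip (Lp j * Qp m)) (Lp j))"
    by (rule span_Lp) (use degree_Qp[of m] assms in auto)
  then have "intP m (gl_node s l) = (\<Sum>j\<le>s. Xmat j m * legP j (gl_node s l))"
    by (metis (no_types, lifting) Ip_LQ intP_poly legP_poly poly_smult poly_sum sum.cong)
  also have "\<dots> = (\<Sum>j<s. Xmat j m * legP j (gl_node s l))"
    using node_root[OF assms(2)] by (simp add: lessThan_Suc_atMost[symmetric] legP_poly)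
  finally show ?thesis by (simp add: mult.commute)
qed

lemma gam_lemma:
  fixes v :: "real \<Rightarrow> real^'m"
  assumes s1: "1 \<le> s" and V: "\<forall>c. v (c*h) = p0 + h *\<^sub>R (\<Sum>j<s. intP j c *\<^sub>R psi j)" and i: "i < s"
  shows "gam_hat s h v i = (if i = 0 then p0 else 0) + h *\<^sub>R (\<Sum>j<s. Xmat i j *\<^sub>R psi j)"
proof -
  have "gam_hat s h v i = (\<Sum>l<s. (gl_weight s l * legP i (gl_node s l)) *\<^sub>R
          (p0 + h *\<^sub>R (\<Sum>j<s. intP j (gl_node s l) *\<^sub>R psi j)))"
    unfolding gam_hat_def using V by simp
  also have "\<dots> = (\<Sum>l<s. gl_weight s l * legP i (gl_node s l)) *\<^sub>R p0 +
     h *\<^sub>R (\<Sum>j<s. (\<Sum>l<s. gl_weight s l * legP i (gl_node s l) * intP j (gl_node s l)) *\<^sub>R psi j)"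
    by (rule vec_swap) auto
  also have "\<dots> = (if i = 0 then p0 else 0) + h *\<^sub>R (\<Sum>j<s. Xmat i j *\<^sub>R psi j)"
    using quad_L[OF s1 i] quad_LQ[OF s1 i] by simp
  finally show ?thesis .
qed

lemma u_lemma:
  fixes u :: "real \<Rightarrow> real^'m"
  assumes s1: "1 \<le> s"
    and U: "\<forall>c. u (c*h) = q0 + h *\<^sub>R (\<Sum>i<s. intP i c *\<^sub>R ((if i = 0 then p0 else 0) + h *\<^sub>R (\<Sum>j<s. Xmat i j *\<^sub>R psi j)))"
  shows "u (c*h) = q0 + (h * c) *\<^sub>R p0 + h^2 *\<^sub>R (\<Sum>j<s. (\<Sum>r<s. intP r c * Xmat r j) *\<^sub>R psi j)"
proof -
  have "(\<Sum>i<s. intP i c *\<^sub>R ((if i = 0 then p0 else 0) + h *\<^sub>R (\<Sum>j<s. Xmat i j *\<^sub>R psi j)))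
     = (\<Sum>i<s. intP i c *\<^sub>R (if i = 0 then p0 else 0)) + h *\<^sub>R (\<Sum>j<s. (\<Sum>r<s. intP r c * Xmat r j) *\<^sub>R psi j)"
    by (rule vec_swap2) auto
  also have "(\<Sum>i<s. intP i c *\<^sub>R (if i = 0 then p0 else 0)) = c *\<^sub>R p0"
    using s1 by (simp add: sum_if0 intP0)
  finally show ?thesis using U by (simp add: scaleR_add_right power2_eq_square)
qed

lemma rhs_lemma:
  fixes u v :: "real \<Rightarrow> real^'m"
  assumes s1: "1 \<le> s"
    and V: "\<forall>c. v (c*h) = p0 + h *\<^sub>R (\<Sum>j<s. intP j c *\<^sub>R psi j)"
    and U: "\<forall>c. u (c*h) = q0 + h *\<^sub>R (\<Sum>i<s. intP i c *\<^sub>R ((if i = 0 then p0 else 0) + h *\<^sub>R (\<Sum>j<s. Xmat i j *\<^sub>R psi j)))"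
    and i: "i < s"
  shows "(\<Sum>j<s. rho_hat B s h u i j *v gam_hat s h v j) - eta_hat gU k h u i =
        (\<Sum>l<s. (gl_weight s l * legP i (gl_node s l)) *\<^sub>R
           (B (q0 + (h * gl_node s l) *\<^sub>R p0 + h^2 *\<^sub>R (\<Sum>j<s. IX s s l j *\<^sub>R psi j))
            *v (p0 + h *\<^sub>R (\<Sum>j<s. intP j (gl_node s l) *\<^sub>R psi j))))
      - (\<Sum>l<k. (gl_weight k l * legP i (gl_node k l)) *\<^sub>R
           gU (q0 + (h * gl_node k l) *\<^sub>R p0 + h^2 *\<^sub>R (\<Sum>j<s. IX k s l j *\<^sub>R psi j)))"
proof -
  define G where "G j = (if j = 0 then p0 else 0) + h *\<^sub>R (\<Sum>m<s. Xmat j m *\<^sub>R psi m)" for j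
  define c where "c l = gl_node s l" for l
  define w where "w l = gl_weight s l" for l
  have ul: "u (x*h) = q0 + (h * x) *\<^sub>R p0 + h^2 *\<^sub>R (\<Sum>j<s. (\<Sum>r<s. intP r x * Xmat r j) *\<^sub>R psi j)" for x
    by (rule u_lemma[OF s1 U])
  have gam: "gam_hat s h v j = G j" if "j < s" for j
    unfolding G_def by (rule gam_lemma[OF s1 V that])
  have expand: "(\<Sum>j<s. legP j (c l) *\<^sub>R G j) = p0 + h *\<^sub>R (\<Sum>m<s. intP m (c l) *\<^sub>R psi m)" if l: "l < s" for l
  proof -
    have "(\<Sum>j<s. legP j (c l) *\<^sub>R G j) = (\<Sum>j<s. legP j (c l) *\<^sub>R (if j = 0 then p0 else 0)) +
        h *\<^sub>R (\<Sum>m<s. (\<Sum>j<s. legP j (c l) * Xmat j m) *\<^sub>R psi m)"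
      unfolding G_def by (rule vec_swap2) auto
    also have "(\<Sum>j<s. legP j (c l) *\<^sub>R (if j = 0 then p0 else 0)) = p0"
      using s1 by (simp add: sum_if0 legP0)
    also have "(\<Sum>m<s. (\<Sum>j<s. legP j (c l) * Xmat j m) *\<^sub>R psi m) = (\<Sum>m<s. intP m (c l) *\<^sub>R psi m)"
      by (intro sum.cong refl) (simp add: c_def node_expand l)
    finally show ?thesis .
  qed
  have "(\<Sum>j<s. rho_hat B s h u i j *v gam_hat s h v j) =
     (\<Sum>j<s. \<Sum>l<s. (w l * legP i (c l) * legP j (c l)) *\<^sub>R (B (u (c l * h)) *v G j))"
    by (intro sum.cong refl) (simp add: gam rho_hat_def mv_sum_left mv_scaleR_left w_def c_def)
  also have "\<dots> = (\<Sum>l<s. \<Sum>j<s. (w l * legP i (c l)) *\<^sub>R (B (u (c l * h)) *v (legP j (c l) *\<^sub>R G j)))"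
    by (subst sum.swap) (simp add: mv_scaleR_right mult.assoc)
  also have "\<dots> = (\<Sum>l<s. (w l * legP i (c l)) *\<^sub>R (B (u (c l * h)) *v (\<Sum>j<s. legP j (c l) *\<^sub>R G j)))"
    by (simp add: mv_sum_right scaleR_sum_right)
  also have "\<dots> = (\<Sum>l<s. (w l * legP i (c l)) *\<^sub>R
           (B (q0 + (h * c l) *\<^sub>R p0 + h^2 *\<^sub>R (\<Sum>j<s. IX s s l j *\<^sub>R psi j))
            *v (p0 + h *\<^sub>R (\<Sum>j<s. intP j (c l) *\<^sub>R psi j))))"
    by (intro sum.cong refl) (simp add: expand[unfolded c_def] ul IX_def c_def)
  finally have rho: "(\<Sum>j<s. rho_hat B s h u i j *v gam_hat s h v j) = \<dots>" .
  have eta: "eta_hat gU k h u i = (\<Sum>l<k. (gl_weight k l * legP i (gl_node k l)) *\<^sub>R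
           gU (q0 + (h * gl_node k l) *\<^sub>R p0 + h^2 *\<^sub>R (\<Sum>j<s. IX k s l j *\<^sub>R psi j)))"
    unfolding eta_hat_def by (simp add: ul IX_def)
  show ?thesis unfolding rho eta by (simp add: c_def w_def)
qed



lemma intP_1: "intP i 1 = (if i = 0 then 1 else 0)"
  by (simp add: intP_poly Qp_1)

lemma sum_intP_1: "0 < (s::nat) \<Longrightarrow> (\<Sum>i<s. intP i 1 *\<^sub>R f i) = (f 0 :: 'v::real_vector)"
proof -
  assume s: "0 < s"
  have "(\<Sum>i<s. intP i 1 *\<^sub>R f i) = (\<Sum>i<s. if i = 0 then f 0 else 0)"
    by (intro sum.cong) (auto simp: intP_1)
  also have "\<dots> = f 0" by (subst sum.delta) (use s in auto)
  finally show ?thesis .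
qed

lemma xi_1: "xi (Suc 0) = 1 / (2 * sqrt 3)" by (simp add: xi_def)

lemma sum_X0:
  assumes "2 \<le> (s::nat)"
  shows "(\<Sum>j<s. Xmat 0 j *\<^sub>R psi j) = (1/2) *\<^sub>R psi 0 - (1 / (2 * sqrt 3)) *\<^sub>R (psi 1 :: 'v::real_vector)"
proof -
  have "(\<Sum>j<s. Xmat 0 j *\<^sub>R psi j) = (\<Sum>j\<in>{0,1}. Xmat 0 j *\<^sub>R psi j)"
    using assms by (intro sum.mono_neutral_right) (auto simp: Xmat_def)
  also have "\<dots> = (1/2) *\<^sub>R psi 0 - (1 / (2 * sqrt 3)) *\<^sub>R psi 1"
    by (simp add: Xmat_def xi_0 xi_1)
  finally show ?thesis .
qed

theorem mainTheorem8:
  fixes U :: "real^'m \<Rightarrow> real" and gU :: "real^'m \<Rightarrow> real^'m"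
    and B :: "real^'m \<Rightarrow> real^'m^'m"
    and s k :: nat and h :: real and q0 p0 :: "real^'m"
  assumes "2 \<le> s" and "s \<le> k" and "h > 0"
    and U_grad: "\<And>x. (U has_derivative (\<lambda>d. gU x \<bullet> d)) (at x)"
    and gU_cont: "continuous_on UNIV gU"
    and B_cont: "continuous_on UNIV B"
    and B_skew: "\<And>q. transpose (B q) = - B q"
  shows "(\<forall>u v. is_vpoly s u \<and> is_vpoly s v \<and> LIM_eqs gU B k s h q0 p0 u v \<longrightarrow>
            (let psi = (\<lambda>i. (\<Sum>j<s. rho_hat B s h u i j *v gam_hat s h v j) - eta_hat gU k h u i)
             in eqD gU B k s h q0 p0 psi \<and>
                u h = q0 + h *\<^sub>R p0 + (h^2 / 2) *\<^sub>R (psi 0 - (1 / sqrt 3) *\<^sub>R psi 1) \<and>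
                v h = p0 + h *\<^sub>R psi 0))
       \<and> (\<forall>psi. eqD gU B k s h q0 p0 psi \<longrightarrow>
            (let gam = (\<lambda>i. (if i = 0 then p0 else 0) + h *\<^sub>R (\<Sum>j<s. Xmat i j *\<^sub>R psi j));
                 u = (\<lambda>t. q0 + h *\<^sub>R (\<Sum>i<s. intP i (t / h) *\<^sub>R gam i));
                 v = (\<lambda>t. p0 + h *\<^sub>R (\<Sum>i<s. intP i (t / h) *\<^sub>R psi i))
             in is_vpoly s u \<and> is_vpoly s v \<and> LIM_eqs gU B k s h q0 p0 u v))"
proof (intro conjI allI impI)
  have s1: "1 \<le> s" and s0: "0 < s" using assms(1) by auto
  have hnz: "h \<noteq> 0" using assms(3) by simp
  have intPf: "intP i = (\<lambda>c. poly (Qp i) c)" for i by (rule ext) (rule intP_poly)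
  fix u v :: "real \<Rightarrow> real^'m"
  assume H: "is_vpoly s u \<and> is_vpoly s v \<and> LIM_eqs gU B k s h q0 p0 u v"
  define psi where "psi i = (\<Sum>j<s. rho_hat B s h u i j *v gam_hat s h v j) - eta_hat gU k h u i" for i
  have L: "\<forall>c\<in>{0..1}. u (c * h) = q0 + h *\<^sub>R (\<Sum>i<s. intP i c *\<^sub>R gam_hat s h v i) \<and>
        v (c * h) = p0 + h *\<^sub>R (\<Sum>i<s. intP i c *\<^sub>R psi i)"
    using H unfolding LIM_eqs_def psi_def by (simp add: algebra_simps)
  have V: "\<forall>c. v (c * h) = p0 + h *\<^sub>R (\<Sum>i<s. intP i c *\<^sub>R psi i)"
  proof
    fix c
    show "v (c * h) = p0 + h *\<^sub>R (\<Sum>i<s. intP i c *\<^sub>R psi i)"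
      unfolding intPf
      by (rule vp_ext[where f="\<lambda>c. v (c * h)", OF vp_isv vp_form])
         (use H L in \<open>auto simp: intPf\<close>)
  qed
  have gam: "gam_hat s h v i = (if i = 0 then p0 else 0) + h *\<^sub>R (\<Sum>j<s. Xmat i j *\<^sub>R psi j)"
    if "i < s" for i
    by (rule gam_lemma[OF s1 V that])
  have U0: "\<forall>c. u (c * h) = q0 + h *\<^sub>R (\<Sum>i<s. intP i c *\<^sub>R gam_hat s h v i)"
  proof
    fix c
    show "u (c * h) = q0 + h *\<^sub>R (\<Sum>i<s. intP i c *\<^sub>R gam_hat s h v i)"
      unfolding intPf
      by (rule vp_ext[where f="\<lambda>c. u (c * h)", OF vp_isv vp_form])
         (use H L in \<open>auto simp: intPf\<close>)
  qed
  have Uf: "\<forall>c. u (c * h) = q0 + h *\<^sub>R (\<Sum>i<s. intP i c *\<^sub>R ((if i = 0 then p0 else 0) + h *\<^sub>R (\<Sum>j<s. Xmat i j *\<^sub>R psi j)))"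
    using U0 gam by simp
  have D: "eqD gU B k s h q0 p0 psi"
    unfolding eqD_def
  proof (intro allI impI)
    fix i assume i: "i < s"
    have "psi i = (\<Sum>j<s. rho_hat B s h u i j *v gam_hat s h v j) - eta_hat gU k h u i" by (rule psi_def)
    also note rhs_lemma[OF s1 V Uf i]
    finally show "psi i =
        (\<Sum>l<s. (gl_weight s l * legP i (gl_node s l)) *\<^sub>R
           (B (q0 + (h * gl_node s l) *\<^sub>R p0 + h^2 *\<^sub>R (\<Sum>j<s. IX s s l j *\<^sub>R psi j))
            *v (p0 + h *\<^sub>R (\<Sum>j<s. intP j (gl_node s l) *\<^sub>R psi j))))
      - (\<Sum>l<k. (gl_weight k l * legP i (gl_node k l)) *\<^sub>R
           gU (q0 + (h * gl_node k l) *\<^sub>R p0 + h^2 *\<^sub>R (\<Sum>j<s. IX k s l j *\<^sub>R psi j)))" .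
  qed
  have uh: "u h = q0 + h *\<^sub>R p0 + (h^2 / 2) *\<^sub>R (psi 0 - (1 / sqrt 3) *\<^sub>R psi 1)"
  proof -
    have "u h = u (1 * h)" by simp
    also have "\<dots> = q0 + h *\<^sub>R (\<Sum>i<s. intP i 1 *\<^sub>R ((if i = 0 then p0 else 0) + h *\<^sub>R (\<Sum>j<s. Xmat i j *\<^sub>R psi j)))"
      by (rule Uf[rule_format])
    also have "\<dots> = q0 + h *\<^sub>R (p0 + h *\<^sub>R (\<Sum>j<s. Xmat 0 j *\<^sub>R psi j))"
      by (subst sum_intP_1[OF s0]) simp
    also have "\<dots> = q0 + h *\<^sub>R p0 + (h^2 / 2) *\<^sub>R (psi 0 - (1 / sqrt 3) *\<^sub>R psi 1)"
      unfolding sum_X0[OF assms(1)] by (simp add: algebra_simps power2_eq_square)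
    finally show ?thesis .
  qed
  have vh: "v h = p0 + h *\<^sub>R psi 0"
  proof -
    have "v h = v (1 * h)" by simp
    also have "\<dots> = p0 + h *\<^sub>R (\<Sum>i<s. intP i 1 *\<^sub>R psi i)" by (rule V[rule_format])
    also have "\<dots> = p0 + h *\<^sub>R psi 0" by (subst sum_intP_1[OF s0]) simp
    finally show ?thesis .
  qed
  show "let psi = (\<lambda>i. (\<Sum>j<s. rho_hat B s h u i j *v gam_hat s h v j) - eta_hat gU k h u i)
             in eqD gU B k s h q0 p0 psi \<and>
                u h = q0 + h *\<^sub>R p0 + (h^2 / 2) *\<^sub>R (psi 0 - (1 / sqrt 3) *\<^sub>R psi 1) \<and>
                v h = p0 + h *\<^sub>R psi 0"
    using D uh vh unfolding psi_def[abs_def] Let_def by simp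
next
  have s1: "1 \<le> s" and s0: "0 < s" using assms(1) by auto
  have hnz: "h \<noteq> 0" using assms(3) by simp
  have intPf: "intP i = (\<lambda>c. poly (Qp i) c)" for i by (rule ext) (rule intP_poly)
  fix psi :: "nat \<Rightarrow> real^'m"
  assume D: "eqD gU B k s h q0 p0 psi"
  define gam where "gam i = (if i = 0 then p0 else 0) + h *\<^sub>R (\<Sum>j<s. Xmat i j *\<^sub>R psi j)" for i
  define u where "u t = q0 + h *\<^sub>R (\<Sum>i<s. intP i (t / h) *\<^sub>R gam i)" for t
  define v where "v t = p0 + h *\<^sub>R (\<Sum>i<s. intP i (t / h) *\<^sub>R psi i)" for t
  have deg: "\<forall>i\<in>{..<s}. degree (Qp i) \<le> s" proof
    fix i assume "i \<in> {..<s}"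
    then show "degree (Qp i) \<le> s" using degree_Qp[of i] by simp
  qed
  have iu: "is_vpoly s u" unfolding u_def[abs_def] intPf by (rule isv_form[OF deg]) simp
  have iv: "is_vpoly s v" unfolding v_def[abs_def] intPf by (rule isv_form[OF deg]) simp
  have V: "\<forall>c. v (c * h) = p0 + h *\<^sub>R (\<Sum>i<s. intP i c *\<^sub>R psi i)"
    using hnz by (simp add: v_def)
  have Uf: "\<forall>c. u (c * h) = q0 + h *\<^sub>R (\<Sum>i<s. intP i c *\<^sub>R ((if i = 0 then p0 else 0) + h *\<^sub>R (\<Sum>j<s. Xmat i j *\<^sub>R psi j)))"
    using hnz by (simp add: u_def gam_def)
  have gh: "gam_hat s h v i = gam i" if "i < s" for i
    unfolding gam_def by (rule gam_lemma[OF s1 V that])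
  have ps: "- eta_hat gU k h u i + (\<Sum>j<s. rho_hat B s h u i j *v gam_hat s h v j) = psi i" if i: "i < s" for i
  proof -
    have "(\<Sum>j<s. rho_hat B s h u i j *v gam_hat s h v j) - eta_hat gU k h u i = psi i"
      by (rule trans[OF rhs_lemma[OF s1 V Uf i] D[unfolded eqD_def, rule_format, OF i, symmetric]])
    then show ?thesis by (simp add: algebra_simps)
  qed
  have LIM: "LIM_eqs gU B k s h q0 p0 u v"
    unfolding LIM_eqs_def
  proof (intro ballI conjI)
    fix c :: real assume c: "c \<in> {0..1}"
    have "u (c * h) = q0 + h *\<^sub>R (\<Sum>i<s. intP i c *\<^sub>R gam i)"
      using hnz by (simp add: u_def)
    also have "(\<Sum>i<s. intP i c *\<^sub>R gam i) = (\<Sum>i<s. intP i c *\<^sub>R gam_hat s h v i)"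
      by (intro sum.cong refl) (simp add: gh)
    finally show "u (c * h) = q0 + h *\<^sub>R (\<Sum>i<s. intP i c *\<^sub>R gam_hat s h v i)" .
    show "v (c * h) = p0 + h *\<^sub>R (\<Sum>i<s. intP i c *\<^sub>R
              (- eta_hat gU k h u i + (\<Sum>j<s. rho_hat B s h u i j *v gam_hat s h v j)))"
    proof -
      have "v (c * h) = p0 + h *\<^sub>R (\<Sum>i<s. intP i c *\<^sub>R psi i)" using V by blast
      also have "(\<Sum>i<s. intP i c *\<^sub>R psi i) = (\<Sum>i<s. intP i c *\<^sub>R
              (- eta_hat gU k h u i + (\<Sum>j<s. rho_hat B s h u i j *v gam_hat s h v j)))"
        by (intro sum.cong refl) (simp only: ps lessThan_iff)
      finally show ?thesis .
    qed
  qed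
  show "let gam = (\<lambda>i. (if i = 0 then p0 else 0) + h *\<^sub>R (\<Sum>j<s. Xmat i j *\<^sub>R psi j));
                 u = (\<lambda>t. q0 + h *\<^sub>R (\<Sum>i<s. intP i (t / h) *\<^sub>R gam i));
                 v = (\<lambda>t. p0 + h *\<^sub>R (\<Sum>i<s. intP i (t / h) *\<^sub>R psi i))
             in is_vpoly s u \<and> is_vpoly s v \<and> LIM_eqs gU B k s h q0 p0 u v"
    using iu iv LIM unfolding Let_def gam_def[abs_def] u_def[abs_def] v_def[abs_def] by simp
qed

end
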